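(* Let $c\in\mathbb{R}$, $\beta\geq0$, $q\in(0,1)$, $Q=q^2$ and $y=e^{-2\beta}$. Then $$Z_{\beta,q,c} = y^{1/2} + \sum_{\substack{L,R\geq0\\ L+R>0}}y^{L+R} \sum_{\substack{\ell_1,\dots,\ell_L\geq 1 \\ m_1,\dots,m_{R}\geq 1}}\prod_{j=1}^{L} \frac{Q^{\frac12 \ell_j(\ell_j-1)+c\ell_j+j\ell_j+\ell_{j-1}(\ell_{j}+\cdots+\ell_{L})}}{1-Q^{\ell_{j}+\cdots + \ell_{L}}}\prod_{j=1}^{R}\frac{Q^{\frac12 m_j(m_j-1)-cm_j+jm_j+m_{j-1}(m_{j}+\cdots+m_{R})}}{1-Q^{m_{j}+\cdots+m_{R}}}\Big(y^{-1/2} + \big(y^{1/2}-y^{-1/2}\big)Q^{\ell_1+\cdots+\ell_L}Q^{m_1+\cdots+m_R}\Big),$$ with the conventions $\ell_0=-1$, $m_0=0$.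
   Context: Spin configurations are $\sigma\in\{-1,+1\}^{\mathbb{Z}}$; $\mathcal{B}$ is the set of configurations for which there exist $a,b\in\mathbb{Z}$ with $\sigma_{a-i}=-1$ and $\sigma_{b+i}=+1$ for all $i\in\mathbb{N}$. With $H(\sigma)=\sum_{i\in\mathbb{Z}}\mathbb{1}_{\{\sigma_i\neq\sigma_{i+1}\}}$ (interaction $J(i)\equiv1$) and $f_c(\sigma)=2\sum_{i=1}^\infty(i-c)\mathbb{1}_{\{\sigma_i=-1\}}-2\sum_{i=-\infty}^0(i-c)\mathbb{1}_{\{\sigma_i=1\}}$, the partition function is $Z_{\beta,q,c}=\sum_{\sigma\in\mathcal{B}}e^{-\beta H(\sigma)}q^{f_c(\sigma)}$. In the sum, $L,R\geq 0$ with $L+R>0$, the $\ell_j,m_j$ range over positive integers, and empty products equal $1$. *)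

theory Defs
  imports "HOL-Analysis.Analysis"
begin

definition spin_configs :: "(int \<Rightarrow> int) set" where
  "spin_configs = {\<sigma>. (\<forall>i. \<sigma> i = -1 \<or> \<sigma> i = 1) \<and>
     (\<exists>a b. \<forall>i::nat. \<sigma> (a - int i) = -1 \<and> \<sigma> (b + int i) = 1)}"

text \<open>Hamiltonian with J = 1: number of domain walls.\<close>
definition hamiltonian :: "(int \<Rightarrow> int) \<Rightarrow> real" where
  "hamiltonian \<sigma> = (\<Sum>\<^sub>\<infinity> i\<in>(UNIV::int set). if \<sigma> i \<noteq> \<sigma> (i+1) then 1 else 0)"

definition f_field :: "real \<Rightarrow> (int \<Rightarrow> int) \<Rightarrow> real" where
  "f_field c \<sigma> =
     2 * (\<Sum>\<^sub>\<infinity> i\<in>{i::int. i \<ge> 1}. (real_of_int i - c) * (if \<sigma> i = -1 then 1 else 0))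
   - 2 * (\<Sum>\<^sub>\<infinity> i\<in>{i::int. i \<le> 0}. (real_of_int i - c) * (if \<sigma> i = 1 then 1 else 0))"

definition Z_term :: "real \<Rightarrow> real \<Rightarrow> real \<Rightarrow> (int \<Rightarrow> int) \<Rightarrow> real" where
  "Z_term \<beta> q c \<sigma> = exp (- \<beta> * hamiltonian \<sigma>) * q powr (f_field c \<sigma>)"

definition block_prod :: "real \<Rightarrow> real \<Rightarrow> real \<Rightarrow> nat list \<Rightarrow> real" where
  "block_prod Q d x0 xs =
     (\<Prod>j\<in>{1..length xs}.
        let xj = real (xs ! (j - 1));
            prev = (if j = 1 then x0 else real (xs ! (j - 2)));
            S = sum_list (drop (j - 1) xs)
        in Q powr (xj * (xj - 1) / 2 + d * xj + real j * xj + prev * real S)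
           / (1 - Q ^ S))"

definition index_set :: "(nat list \<times> nat list) set" where
  "index_set = {(ls, ms). (\<forall>x\<in>set ls. 0 < x) \<and> (\<forall>x\<in>set ms. 0 < x) \<and>
                          length ls + length ms > 0}"

definition series_term :: "real \<Rightarrow> real \<Rightarrow> real \<Rightarrow> nat list \<times> nat list \<Rightarrow> real" where
  "series_term y Q c p = (case p of (ls, ms) \<Rightarrow>
     y ^ (length ls + length ms) * block_prod Q c (-1) ls * block_prod Q (-c) 0 ms *
     (y powr (-1/2) + (y powr (1/2) - y powr (-1/2)) * Q ^ sum_list ls * Q ^ sum_list ms))"

end

theory Submission
  imports Defs
begin

fun enc :: "nat \<Rightarrow> nat list \<Rightarrow> nat list \<Rightarrow> nat set" where
  "enc x0 (l#ls) (g#gs) = {x0+g..<x0+g+l} \<union> enc (x0+g+l+1) ls gs"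
| "enc x0 _ _ = {}"

fun wt :: "nat \<Rightarrow> real \<Rightarrow> nat list \<Rightarrow> nat list \<Rightarrow> real" where
  "wt x0 d (l#ls) (g#gs) = real l * real (x0+g) + real l * (real l - 1)/2 + d * real l + wt (x0+g+l+1) d ls gs"
| "wt x0 d _ _ = 0"

definition bd :: "nat set \<Rightarrow> nat set" where "bd S = {j. (j \<in> S) \<noteq> (Suc j \<in> S)}"

definition SL :: "(nat list \<times> nat list) set" where
  "SL = {(ls,gs). (\<forall>x\<in>set ls. 0<x) \<and> length gs = length ls}"

lemma enc_ge: "enc x0 ls gs \<subseteq> {x0..}"
  by (induction x0 ls gs rule: enc.induct) auto

lemma enc_finite[simp]: "finite (enc x0 ls gs)"
  by (induction x0 ls gs rule: enc.induct) auto

lemma sum_interval: "(\<Sum>i\<in>{a..<a+l::nat}. real i + d) = real l * real a + real l * (real l - 1)/2 + d * real l"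
proof (induction l)
  case (Suc l)
  have "{a..<a+Suc l} = insert (a+l) {a..<a+l}" by auto
  then have "(\<Sum>i\<in>{a..<a+Suc l}. real i + d) = (\<Sum>i\<in>{a..<a+l}. real i + d) + (real (a+l) + d)"
    by simp
  then show ?case using Suc by (simp add: field_simps)
qed simp

lemma sum_enc: "(\<Sum>i\<in>enc x0 ls gs. real i + d) = wt x0 d ls gs"
proof (induction x0 ls gs rule: enc.induct)
  case (1 x0 l ls g gs)
  have disj: "{x0+g..<x0+g+l} \<inter> enc (x0+g+l+1) ls gs = {}"
    using enc_ge[of "x0+g+l+1" ls gs] by auto
  have "(\<Sum>i\<in>{x0+g..<x0+g+l} \<union> enc (x0+g+l+1) ls gs. real i + d) =
     (\<Sum>i\<in>{x0+g..<x0+g+l}. real i + d) + (\<Sum>i\<in>enc (x0+g+l+1) ls gs. real i + d)"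
    by (rule sum.union_disjoint[OF _ _ disj]) auto
  then show ?case
    using 1 by (simp add: sum_interval)
qed auto

lemma wt_shift: "wt (x0+k) d ls gs = wt x0 d ls gs + real k * real (sum_list (take (length gs) ls))"
proof (induction x0 ls gs arbitrary: k rule: enc.induct)
  case (1 x0 l ls g gs)
  have "wt (x0+g+l+1+k) d ls gs = wt (x0+g+l+1) d ls gs + real k * real (sum_list (take (length gs) ls))"
    using 1 by simp
  then show ?case by (simp add: algebra_simps)
qed auto

lemma bd_union:
  assumes "l > 0" "S' \<subseteq> {a+l+1..}"
  shows "bd ({a..<a+l} \<union> S') = {j. j = a+l-1 \<or> Suc j = a} \<union> bd S'"
  using assms unfolding bd_def by (auto; force)

lemma bd_ge: "bd (enc x0 ls gs) \<subseteq> {x0 - 1..}"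
  using enc_ge[of x0 ls gs] unfolding bd_def by force

lemma bd_finite[simp]: "finite (bd (enc x0 ls gs))"
proof -
  have "bd (enc x0 ls gs) \<subseteq> enc x0 ls gs \<union> (\<lambda>j. j - 1) ` enc x0 ls gs"
    unfolding bd_def by (force simp: image_iff)
  then show ?thesis by (rule finite_subset) auto
qed

lemma card_bd:
  "(\<forall>x\<in>set ls. 0<x) \<Longrightarrow> length gs = length ls \<Longrightarrow>
   card (bd (enc x0 ls gs)) = 2 * length ls - (if x0 = 0 \<and> ls \<noteq> [] \<and> hd gs = 0 then 1 else 0)"
proof (induction x0 ls gs rule: enc.induct)
  case (1 x0 l ls g gs)
  let ?a = "x0+g"
  have lpos: "l > 0" using 1 by auto
  have eq: "bd (enc x0 (l#ls) (g#gs)) = {j. j = ?a+l-1 \<or> Suc j = ?a} \<union> bd (enc (x0+g+l+1) ls gs)"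
    using bd_union[OF lpos, of "enc (x0+g+l+1) ls gs" ?a] enc_ge[of "x0+g+l+1" ls gs] by simp
  have disj: "{j. j = ?a+l-1 \<or> Suc j = ?a} \<inter> bd (enc (x0+g+l+1) ls gs) = {}"
    using bd_ge[of "x0+g+l+1" ls gs] lpos by auto
  have c1: "card {j. j = ?a+l-1 \<or> Suc j = ?a} = (if ?a = 0 then 1 else 2)"
  proof (cases "?a = 0")
    case True
    then have "{j. j = ?a+l-1 \<or> Suc j = ?a} = {?a+l-1}" by auto
    then show ?thesis using True by simp
  next
    case False
    then have "{j. j = ?a+l-1 \<or> Suc j = ?a} = {?a+l-1, ?a - 1}" by auto
    moreover have "?a+l-1 \<noteq> ?a - 1" using lpos False by arith
    ultimately have "card {j. j = ?a+l-1 \<or> Suc j = ?a} = 2" by simp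
    then show ?thesis using False by simp
  qed
  have IH: "card (bd (enc (x0+g+l+1) ls gs)) = 2 * length ls" using 1 by auto
  have "card (bd (enc x0 (l#ls) (g#gs))) = (if ?a = 0 then 1 else 2) + 2 * length ls"
  proof -
    have fin1: "finite {j. j = ?a+l-1 \<or> Suc j = ?a}"
      by (rule finite_subset[of _ "{..?a+l}"]) auto
    have "card (bd (enc x0 (l#ls) (g#gs))) = card {j. j = ?a+l-1 \<or> Suc j = ?a} + card (bd (enc (x0+g+l+1) ls gs))"
      unfolding eq by (rule card_Un_disjoint[OF fin1 _ disj]) simp
    then show ?thesis by (simp only: c1 IH)
  qed
  then show ?case by auto
qed (auto simp: bd_def)

lemma mem_enc0:
  "(\<forall>x\<in>set ls. 0<x) \<Longrightarrow> length gs = length ls \<Longrightarrow>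
   x0 \<in> enc x0 ls gs \<longleftrightarrow> (ls \<noteq> [] \<and> hd gs = 0)"
proof (cases ls)
  case (Cons l ls')
  assume a: "(\<forall>x\<in>set ls. 0<x)" "length gs = length ls"
  then obtain g gs' where "gs = g#gs'" using Cons by (cases gs) auto
  then show ?thesis using Cons a enc_ge[of "x0+g+l+1" ls' gs'] by auto
qed auto


lemma enc_cons_ge: "enc x0 (l#ls) (g#gs) \<subseteq> {x0+g..}"
  using enc_ge[of "x0+g+l+1" ls gs] by auto

lemma enc_rest: "enc (x0+g+l+1) ls gs = enc x0 (l#ls) (g#gs) - {x0+g..<x0+g+l}"
  using enc_ge[of "x0+g+l+1" ls gs] by auto

lemma enc_inj:
  "(ls,gs)\<in>SL \<Longrightarrow> (ls',gs')\<in>SL \<Longrightarrow> enc x0 ls gs = enc x0 ls' gs' \<Longrightarrow> ls = ls' \<and> gs = gs'"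
proof (induction ls arbitrary: x0 gs ls' gs')
  case Nil
  then have "gs = []" by (simp add: SL_def)
  show ?case
  proof (cases ls')
    case Nil then show ?thesis using Nil.prems \<open>gs = []\<close> by (simp add: SL_def)
  next
    case (Cons l' ls'')
    then obtain g' gs'' where "gs' = g'#gs''" using Nil.prems by (cases gs') (auto simp: SL_def)
    moreover have "l' > 0" using Nil.prems Cons by (auto simp: SL_def)
    ultimately have "x0+g' \<in> enc x0 ls' gs'" using Cons by simp
    then show ?thesis using Nil.prems \<open>gs = []\<close> by simp
  qed
next
  case (Cons l ls)
  obtain g gs0 where gs: "gs = g#gs0" using Cons.prems by (cases gs) (auto simp: SL_def)
  have lpos: "l > 0" using Cons.prems by (auto simp: SL_def)
  note prems = Cons.prems and IH = Cons.IH
  show ?case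
  proof (cases ls')
    case Nil
    then have "gs' = []" using prems by (simp add: SL_def)
    have "x0+g \<in> enc x0 (l#ls) gs" using gs lpos by simp
    then show ?thesis using prems Nil \<open>gs' = []\<close> by simp
  next
    case (Cons l' ls'')
    note Cons2 = this
    obtain g' gs'' where gs': "gs' = g'#gs''" using prems Cons2 by (cases gs') (auto simp: SL_def)
    have lpos': "l' > 0" using prems Cons2 by (auto simp: SL_def)
    let ?E = "enc x0 (l#ls) (g#gs0)"
    let ?E' = "enc x0 (l'#ls'') (g'#gs'')"
    have EE: "?E = ?E'" using prems gs gs' Cons2 by simp
    have h1: "x0+g \<in> ?E" using lpos by simp
    have "x0+g \<in> ?E'" using EE h1 by metis
    then have "x0+g' \<le> x0+g" using enc_cons_ge[of x0 l' ls'' g' gs''] by auto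
    moreover have h2: "x0+g' \<in> ?E'" using lpos' by simp
    have "x0+g' \<in> ?E" using EE h2 by metis
    then have "x0+g \<le> x0+g'" using enc_cons_ge[of x0 l ls g gs0] by auto
    ultimately have gg: "g = g'" by simp
    have notin: "x0+g+k \<notin> enc x0 (k#ks) (g#hs)" for k ks hs
      using enc_ge[of "x0+g+k+1" ks hs] by auto
    have ll: "l = l'"
    proof (rule ccontr)
      assume "l \<noteq> l'"
      then consider "l < l'" | "l' < l" by linarith
      then show False
      proof cases
        case 1
        then have "x0+g+l \<in> ?E'" using gg by simp
        then show False using EE notin by metis
      next
        case 2
        then have "x0+g+l' \<in> ?E" by simp
        then show False using EE notin gg by metis
      qed
    qed
    have "enc (x0+g+l+1) ls gs0 = enc (x0+g+l+1) ls'' gs''"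
      using enc_rest[of x0 g l ls gs0] enc_rest[of x0 g l ls'' gs''] EE gg ll by simp
    moreover have "(ls,gs0) \<in> SL" "(ls'',gs'') \<in> SL"
      using prems gs gs' Cons2 by (auto simp: SL_def)
    ultimately have "ls = ls'' \<and> gs0 = gs''" using IH by blast
    then show ?thesis using gs gs' Cons2 gg ll by simp
  qed
qed

lemma enc_surj:
  "finite S \<Longrightarrow> S \<subseteq> {x0..} \<Longrightarrow> \<exists>ls gs. (ls,gs) \<in> SL \<and> S = enc x0 ls gs"
proof (induction "card S" arbitrary: S x0 rule: less_induct)
  case less
  show ?case
  proof (cases "S = {}")
    case True
    then show ?thesis by (intro exI[of _ "[]"]) (auto simp: SL_def)
  next
    case False
    define a where "a = Min S"
    have aS: "a \<in> S" using False less.prems a_def by simp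
    have amin: "\<And>x. x \<in> S \<Longrightarrow> a \<le> x" using less.prems a_def by simp
    have ax0: "x0 \<le> a" using aS less.prems by auto
    have ex: "\<exists>k. a + k \<notin> S"
    proof -
      obtain k where "a + k \<notin> S"
        using less.prems(1) by (metis ex_new_if_finite infinite_UNIV_nat finite_imageI
           add_diff_inverse_nat finite_nat_set_iff_bounded_le not_add_less1 le_less_trans
           le_add_diff_inverse nat_le_linear)
      then show ?thesis by blast
    qed
    define l where "l = (LEAST k. a + k \<notin> S)"
    have l1: "a + l \<notin> S" using LeastI_ex[OF ex] l_def by simp
    have l2: "\<And>k. k < l \<Longrightarrow> a + k \<in> S" using not_less_Least l_def by blast
    have lpos: "l > 0" using l1 aS by (cases l) auto
    have int_sub: "{a..<a+l} \<subseteq> S"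
    proof
      fix x assume "x \<in> {a..<a+l}"
      then have "a + (x - a) \<in> S" using l2[of "x - a"] by auto
      then show "x \<in> S" using \<open>x \<in> {a..<a+l}\<close> by auto
    qed
    define S' where "S' = S - {a..<a+l}"
    have S'ge: "S' \<subseteq> {a+l+1..}"
    proof
      fix x assume "x \<in> S'"
      then have "x \<in> S" "x \<notin> {a..<a+l}" using S'_def by auto
      moreover have "a \<le> x" using amin \<open>x \<in> S\<close> by simp
      moreover have "x \<noteq> a + l" using l1 \<open>x \<in> S\<close> by auto
      ultimately show "x \<in> {a+l+1..}" by auto
    qed
    have "a \<notin> S'" using lpos S'_def by auto
    then have "S' \<subset> S" using aS S'_def by blast
    then have "card S' < card S"
      using less.prems(1) by (intro psubset_card_mono) auto
    moreover have "finite S'" using S'_def less.prems by simp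
    ultimately obtain ls gs where lsgs: "(ls,gs) \<in> SL" "S' = enc (a+l+1) ls gs"
      using less.hyps S'ge by blast
    have "S = enc x0 (l#ls) ((a - x0)#gs)"
      using lsgs(2) ax0 int_sub unfolding S'_def by auto
    moreover have "(l#ls, (a-x0)#gs) \<in> SL" using lsgs(1) lpos by (auto simp: SL_def)
    ultimately show ?thesis by blast
  qed
qed


definition bpf :: "real \<Rightarrow> real \<Rightarrow> real \<Rightarrow> nat list \<Rightarrow> nat \<Rightarrow> real" where
  "bpf Q d x0 xs j = (let xj = real (xs ! (j - 1));
            prev = (if j = 1 then x0 else real (xs ! (j - 2)));
            S = sum_list (drop (j - 1) xs)
        in Q powr (xj * (xj - 1) / 2 + d * xj + real j * xj + prev * real S)
           / (1 - Q ^ S))"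

lemma block_prod_bpf: "block_prod Q d x0 xs = (\<Prod>j\<in>{1..length xs}. bpf Q d x0 xs j)"
  unfolding block_prod_def bpf_def by simp

lemma BP_nil[simp]: "block_prod Q d p [] = 1"
  by (simp add: block_prod_def)

lemma sum_nth_shift: "(\<Sum>j\<in>{1..length xs}. real (xs ! (j - 1))) = real (sum_list xs)"
proof -
  have "(\<Sum>j\<in>{1..length xs}. real (xs ! (j - 1))) = (\<Sum>j\<in>{0..<length xs}. real (xs ! j))"
    by (rule sum.reindex_bij_witness[where i="\<lambda>j. j+1" and j="\<lambda>j. j - 1"]) auto
  also have "\<dots> = real (\<Sum>j\<in>{0..<length xs}. xs ! j)" by simp
  also have "\<dots> = real (sum_list xs)" by (simp add: sum_list_sum_nth)
  finally show ?thesis .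
qed

lemma BP_cons:
  assumes "0 < Q"
  shows "block_prod Q d p (x#xs) =
    Q powr (real x * (real x - 1)/2 + d*real x + real x + p * real (x + sum_list xs)) / (1 - Q^(x + sum_list xs))
    * (Q powr real (sum_list xs) * block_prod Q d (real x) xs)"
proof -
  let ?n = "length xs"
  have "block_prod Q d p (x#xs) = (\<Prod>j\<in>{1..Suc ?n}. bpf Q d p (x#xs) j)"
    by (simp add: block_prod_bpf)
  also have "\<dots> = bpf Q d p (x#xs) 1 * (\<Prod>j\<in>{Suc 1..Suc ?n}. bpf Q d p (x#xs) j)"
    by (rule prod.atLeast_Suc_atMost) simp
  also have "(\<Prod>j\<in>{Suc 1..Suc ?n}. bpf Q d p (x#xs) j) = (\<Prod>j\<in>{1..?n}. bpf Q d p (x#xs) (Suc j))"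
    by (rule prod.shift_bounds_cl_Suc_ivl)
  also have "\<dots> = (\<Prod>j\<in>{1..?n}. Q powr real (xs ! (j - 1)) * bpf Q d (real x) xs j)"
  proof (rule prod.cong[OF refl])
    fix j assume j: "j \<in> {1..?n}"
    then obtain k where k: "j = Suc k" by (cases j) auto
    have e1: "(x#xs) ! (Suc j - 1) = xs ! (j - 1)" using k by simp
    have e2: "(if Suc j = 1 then p else real ((x#xs) ! (Suc j - 2))) = (if j = 1 then real x else real (xs ! (j - 2)))"
      using k by (cases k) auto
    have e3: "drop (Suc j - 1) (x#xs) = drop (j - 1) xs" using k by simp
    show "bpf Q d p (x#xs) (Suc j) = Q powr real (xs ! (j - 1)) * bpf Q d (real x) xs j"
      unfolding bpf_def Let_def e1 e2 e3
      by (simp add: powr_add[symmetric] algebra_simps)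
  qed
  also have "\<dots> = (\<Prod>j\<in>{1..?n}. Q powr real (xs ! (j - 1))) * (\<Prod>j\<in>{1..?n}. bpf Q d (real x) xs j)"
    by (rule prod.distrib)
  also have "(\<Prod>j\<in>{1..?n}. Q powr real (xs ! (j - 1))) = Q powr real (sum_list xs)"
    using assms by (simp only: powr_sum[symmetric] sum_nth_shift)
  also have "(\<Prod>j\<in>{1..?n}. bpf Q d (real x) xs j) = block_prod Q d (real x) xs"
    by (simp add: block_prod_bpf)
  also have "bpf Q d p (x#xs) 1 = Q powr (real x * (real x - 1)/2 + d*real x + real x + p * real (x + sum_list xs)) / (1 - Q^(x + sum_list xs))"
    by (simp add: bpf_def Let_def)
  finally show ?thesis .
qed

lemma BP_shift:
  assumes "0 < Q"
  shows "block_prod Q d p xs = Q powr ((p+1) * real (sum_list xs)) * block_prod Q d (-1) xs"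
proof (cases xs)
  case Nil then show ?thesis using assms by simp
next
  case (Cons x xs')
  show ?thesis unfolding Cons BP_cons[OF assms]
    by (simp add: powr_add[symmetric] algebra_simps)
qed


lemma has_sum_prod_nonneg:
  fixes f :: "'a \<Rightarrow> real" and g :: "'b \<Rightarrow> real"
  assumes fa: "(f has_sum a) A" and gb: "(g has_sum b) B"
    and f0: "\<And>x. x\<in>A \<Longrightarrow> 0 \<le> f x" and g0: "\<And>y. y\<in>B \<Longrightarrow> 0 \<le> g y"
  shows "((\<lambda>(x,y). f x * g y) has_sum (a*b)) (A \<times> B)"
proof (rule has_sum_SigmaI[where g = "\<lambda>x. f x * b"])
  show "((\<lambda>y. case (x, y) of (x, y) \<Rightarrow> f x * g y) has_sum f x * b) B" if "x \<in> A" for x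
    using has_sum_cmult_right[OF gb, of "f x"] by simp
  show "((\<lambda>x. f x * b) has_sum a * b) A"
    using has_sum_cmult_left[OF fa] by simp
  have a0: "0 \<le> a" using has_sum_nonneg[OF fa] f0 by auto
  have b0: "0 \<le> b" using has_sum_nonneg[OF gb] g0 by auto
  show "(\<lambda>(x,y). f x * g y) summable_on Sigma A (\<lambda>_. B)"
  proof (rule nonneg_bdd_above_summable_on)
    show "\<And>x. x \<in> Sigma A (\<lambda>_. B) \<Longrightarrow> 0 \<le> (case x of (x, y) \<Rightarrow> f x * g y)"
      using f0 g0 by auto
    show "bdd_above (sum (\<lambda>(x,y). f x * g y) ` {F. F \<subseteq> Sigma A (\<lambda>_. B) \<and> finite F})"
    proof (rule bdd_aboveI2)
      fix F assume F: "F \<in> {F. F \<subseteq> Sigma A (\<lambda>_. B) \<and> finite F}"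
      then have fin: "finite F" and sub: "F \<subseteq> A \<times> B" by auto
      have "sum (\<lambda>(x,y). f x * g y) F \<le> sum (\<lambda>(x,y). f x * g y) (fst ` F \<times> snd ` F)"
        apply (rule sum_mono2)
        using fin sub f0 g0 by (auto simp: image_iff intro!: mult_nonneg_nonneg) force+
      also have "\<dots> = sum f (fst ` F) * sum g (snd ` F)"
        by (simp add: sum_product sum.cartesian_product)
      also have "\<dots> \<le> a * b"
        apply (rule mult_mono)
        using fin sub f0 g0 a0 b0
        by (auto intro!: finite_sum_le_has_sum[OF fa] finite_sum_le_has_sum[OF gb] sum_nonneg)
      finally show "sum (\<lambda>(x,y). f x * g y) F \<le> a * b" .
    qed
  qed
qed

lemma geom_from:
  fixes r :: real
  assumes "0 \<le> r" "r < 1"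
  shows "((\<lambda>n. if k \<le> n then r^n else 0) has_sum (r^k/(1-r))) UNIV"
proof (rule sums_nonneg_imp_has_sum)
  have "(\<lambda>n. r^k * r^n) sums (r^k * (1/(1-r)))"
    using geometric_sums[of r] assms by (intro sums_mult) auto
  then have "(\<lambda>n. (\<lambda>n. if k \<le> n then r^n else 0) (n + k)) sums (r^k/(1-r))"
    by (simp add: power_add mult.commute)
  then show "(\<lambda>n. if k \<le> n then r^n else 0) sums (r^k/(1-r))"
    by (subst (asm) sums_zero_iff_shift) auto
  show "\<And>n. 0 \<le> (if k \<le> n then r^n else 0)" using assms by auto
qed

lemma GS:
  assumes Q: "0 < Q" "Q < 1"
  shows "(\<forall>x\<in>set ls. 0<x) \<Longrightarrow>
    ((\<lambda>gs. (if gs = [] \<or> k \<le> hd gs then 1 else 0) * Q powr wt 0 d ls gs) has_sum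
      (Q^(k * sum_list ls) * block_prod Q d (-1) ls)) {gs. length gs = length ls}"
proof (induction ls arbitrary: k)
  case Nil
  have "{gs::nat list. length gs = length ([]::nat list)} = {[]}" by auto
  then show ?case using Q by (simp only:) (rule has_sum_finiteI, auto)
next
  case (Cons l ls)
  have lpos: "0 < l" and pos: "\<forall>x\<in>set ls. 0<x" using Cons.prems by auto
  define S where "S = sum_list ls"
  define r where "r = Q^(l+S)"
  define C where "C = Q powr (real l * (real l - 1)/2 + d * real l + (real l + 1) * real S)"
  have r0: "0 \<le> r" "r < 1" unfolding r_def using Q lpos by (auto intro: power_less_one_iff[THEN iffD2])
  have IH: "((\<lambda>gs. Q powr wt 0 d ls gs) has_sum block_prod Q d (-1) ls) {gs. length gs = length ls}"
    using Cons.IH[OF pos, of 0] by simp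
  have G: "((\<lambda>g. C * (if k \<le> g then r^g else 0)) has_sum (C * (r^k/(1-r)))) UNIV"
    by (rule has_sum_cmult_right[OF geom_from[OF r0]])
  have P: "((\<lambda>(g,gs). C * (if k \<le> g then r^g else 0) * Q powr wt 0 d ls gs) has_sum
      (C * (r^k/(1-r)) * block_prod Q d (-1) ls)) (UNIV \<times> {gs. length gs = length ls})"
    by (rule has_sum_prod_nonneg[OF G IH]) (use r0 in \<open>auto simp: C_def\<close>)
  have img: "{gs. length gs = length (l#ls)} = (\<lambda>(g,gs). g#gs) ` (UNIV \<times> {gs. length gs = length ls})"
  proof
    show "{gs. length gs = length (l#ls)} \<subseteq> (\<lambda>(g,gs). g#gs) ` (UNIV \<times> {gs. length gs = length ls})"
    proof
      fix gs assume "gs \<in> {gs. length gs = length (l#ls)}"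
      then obtain g gs' where "gs = g#gs'" "length gs' = length ls" by (cases gs) auto
      then show "gs \<in> (\<lambda>(g,gs). g#gs) ` (UNIV \<times> {gs. length gs = length ls})" by force
    qed
  qed auto
  have inj: "inj_on (\<lambda>(g,gs). g#gs) (UNIV \<times> {gs::nat list. length gs = length ls})"
    by (auto simp: inj_on_def)
  have pt: "(if g#gs = [] \<or> k \<le> hd (g#gs) then 1 else 0) * Q powr wt 0 d (l#ls) (g#gs)
      = C * (if k \<le> g then r^g else 0) * Q powr wt 0 d ls gs"
    if "length gs = length ls" for g gs
  proof -
    have w: "wt (g+l+1) d ls gs = wt 0 d ls gs + real (g+l+1) * real S"
      using wt_shift[of 0 "g+l+1" d ls gs] that S_def by simp
    have "Q powr wt 0 d (l#ls) (g#gs) = Q powr (real l * real g + real l * (real l - 1)/2 + d * real l + wt (g+l+1) d ls gs)"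
      by (simp add: add.commute add.left_commute)
    also have "\<dots> = C * Q powr (real ((l+S)*g)) * Q powr wt 0 d ls gs"
      unfolding w C_def by (simp add: powr_add[symmetric] algebra_simps)
    also have "Q powr (real ((l+S)*g)) = r^g"
      unfolding r_def by (subst powr_realpow[OF Q(1)]) (simp add: power_mult)
    finally show ?thesis by simp
  qed
  have "((\<lambda>gs. (if gs = [] \<or> k \<le> hd gs then 1 else 0) * Q powr wt 0 d (l#ls) gs) has_sum
      (C * (r^k/(1-r)) * block_prod Q d (-1) ls)) {gs. length gs = length (l#ls)}"
    unfolding img has_sum_reindex[OF inj] using P
  proof (rule has_sum_cong[THEN iffD1, rotated])
    fix p :: "nat \<times> nat list" assume "p \<in> UNIV \<times> {gs. length gs = length ls}"
    then obtain g gs where p: "p = (g,gs)" "length gs = length ls" by auto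
    show "(\<lambda>(g,gs). C * (if k \<le> g then r^g else 0) * Q powr wt 0 d ls gs) p =
      ((\<lambda>gs. (if gs = [] \<or> k \<le> hd gs then 1 else 0) * Q powr wt 0 d (l#ls) gs) \<circ> (\<lambda>(g,gs). g#gs)) p"
      unfolding p(1) o_def using pt[OF p(2), of g] by (simp only: prod.case)
  qed
  moreover have "C * (r^k/(1-r)) * block_prod Q d (-1) ls = Q^(k * sum_list (l#ls)) * block_prod Q d (-1) (l#ls)"
  proof -
    have "block_prod Q d (-1) (l#ls) = Q powr (real l * (real l - 1)/2 + d*real l + real l + (-1) * real (l + S)) / (1 - r)
      * (Q powr real S * (Q powr ((real l + 1) * real S) * block_prod Q d (-1) ls))"
      unfolding BP_cons[OF Q(1)] BP_shift[OF Q(1), of d "real l" ls] S_def r_def by simp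
    also have "\<dots> = C / (1 - r) * block_prod Q d (-1) ls"
      unfolding C_def by (simp add: powr_add[symmetric] algebra_simps)
    finally have "block_prod Q d (-1) (l#ls) = C / (1 - r) * block_prod Q d (-1) ls" .
    moreover have "Q^(k * sum_list (l#ls)) = r^k" unfolding r_def S_def by (simp add: power_mult[symmetric] mult.commute)
    ultimately show ?thesis by simp
  qed
  ultimately show ?case by simp
qed


definition cfg :: "nat set \<Rightarrow> nat set \<Rightarrow> int \<Rightarrow> int" where
  "cfg B A i = (if 1 \<le> i then (if nat i \<in> A then -1 else 1) else (if nat (-i) \<in> B then 1 else -1))"

lemma cfg_in:
  assumes "finite A" "finite B"
  shows "cfg B A \<in> spin_configs"
proof -
  obtain N where N: "A \<subseteq> {..<N}" "B \<subseteq> {..<N}"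
    using assms finite_nat_bounded[of "A \<union> B"] by auto
  have "\<forall>i::nat. cfg B A (- int N - 1 - int i) = -1 \<and> cfg B A (int N + 1 + int i) = 1"
  proof
    fix i :: nat
    have "nat (-(- int N - 1 - int i)) = N + 1 + i" by simp
    moreover have "N + 1 + i \<notin> B" using N by auto
    moreover have "nat (int N + 1 + int i) = N + 1 + i" by simp
    moreover have "N + 1 + i \<notin> A" using N by auto
    ultimately show "cfg B A (- int N - 1 - int i) = -1 \<and> cfg B A (int N + 1 + int i) = 1"
      unfolding cfg_def by simp
  qed
  then have "\<exists>a b. \<forall>i::nat. cfg B A (a - int i) = -1 \<and> cfg B A (b + int i) = 1"
    by (intro exI[of _ "- int N - 1"] exI[of _ "int N + 1"]) simp
  moreover have "\<forall>i. cfg B A i = -1 \<or> cfg B A i = 1" by (simp add: cfg_def)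
  ultimately show ?thesis unfolding spin_configs_def by blast
qed

lemma cfg_inj:
  assumes "A \<subseteq> {1..}" "A' \<subseteq> {1..}" "cfg B A = cfg B' A'"
  shows "A = A' \<and> B = B'"
proof -
  have "n \<in> A \<longleftrightarrow> n \<in> A'" for n
  proof (cases "n \<ge> 1")
    case True
    have "cfg B A (int n) = cfg B' A' (int n)" using assms by simp
    then show ?thesis using True unfolding cfg_def by (auto split: if_splits)
  next
    case False then show ?thesis using assms by auto
  qed
  moreover have "n \<in> B \<longleftrightarrow> n \<in> B'" for n
  proof -
    have "cfg B A (- int n) = cfg B' A' (- int n)" using assms by simp
    then show ?thesis unfolding cfg_def by (auto split: if_splits)
  qed
  ultimately show ?thesis by auto
qed

lemma cfg_surj:
  assumes "\<sigma> \<in> spin_configs"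
  shows "\<exists>B A. finite A \<and> finite B \<and> A \<subseteq> {1..} \<and> \<sigma> = cfg B A"
proof -
  from assms obtain a b where ab: "\<forall>i::nat. \<sigma> (a - int i) = -1 \<and> \<sigma> (b + int i) = 1"
    and pm: "\<forall>i. \<sigma> i = -1 \<or> \<sigma> i = 1"
    unfolding spin_configs_def by auto
  define A where "A = {n::nat. 1 \<le> n \<and> \<sigma> (int n) = -1}"
  define B where "B = {n::nat. \<sigma> (- int n) = 1}"
  have "A \<subseteq> {n. int n < b}"
  proof
    fix n assume "n \<in> A"
    show "n \<in> {n. int n < b}"
    proof (rule ccontr)
      assume "n \<notin> {n. int n < b}"
      then have "int n = b + int (nat (int n - b))" by auto
      then have "\<sigma> (int n) = 1" using ab by metis
      then show False using \<open>n \<in> A\<close> A_def by auto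
    qed
  qed
  moreover have "finite {n::nat. int n < b}"
    by (rule finite_subset[of _ "{..<nat b}"]) auto
  ultimately have fA: "finite A" by (rule finite_subset)
  have "B \<subseteq> {n. a < - int n}"
  proof
    fix n assume "n \<in> B"
    show "n \<in> {n. a < - int n}"
    proof (rule ccontr)
      assume "n \<notin> {n. a < - int n}"
      then have "- int n = a - int (nat (a + int n))" by auto
      then have "\<sigma> (- int n) = -1" using ab by metis
      then show False using \<open>n \<in> B\<close> B_def by auto
    qed
  qed
  moreover have "finite {n::nat. a < - int n}"
    by (rule finite_subset[of _ "{..<nat (-a)}"]) auto
  ultimately have fB: "finite B" by (rule finite_subset)
  have "\<sigma> = cfg B A"
  proof
    fix i
    show "\<sigma> i = cfg B A i"
    proof (cases "1 \<le> i")
      case True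
      then have "int (nat i) = i" by simp
      then show ?thesis using True pm[rule_format, of i] unfolding cfg_def A_def by auto
    next
      case False
      then have "- int (nat (-i)) = i" by simp
      then show ?thesis using False pm[rule_format, of i] unfolding cfg_def B_def by auto
    qed
  qed
  moreover have "A \<subseteq> {1..}" unfolding A_def by auto
  ultimately show ?thesis using fA fB by blast
qed

definition Phi :: "(nat list \<times> nat list) \<times> (nat list \<times> nat list) \<Rightarrow> int \<Rightarrow> int" where
  "Phi p = cfg (enc 0 (fst (fst p)) (snd (fst p))) (enc 1 (fst (snd p)) (snd (snd p)))"

lemma enc1_ge: "enc 1 ls gs \<subseteq> {1..}"
  using enc_ge[of 1 ls gs] by auto

lemma Phi_bij: "bij_betw Phi (SL \<times> SL) spin_configs"
  unfolding bij_betw_def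
proof
  show "inj_on Phi (SL \<times> SL)"
  proof (rule inj_onI)
    fix p p' assume p: "p \<in> SL \<times> SL" and p': "p' \<in> SL \<times> SL" and eq: "Phi p = Phi p'"
    obtain ls gs ms hs where pp: "p = ((ls,gs),(ms,hs))" by (metis prod.collapse)
    obtain ls' gs' ms' hs' where pp': "p' = ((ls',gs'),(ms',hs'))" by (metis prod.collapse)
    have "enc 1 ms hs = enc 1 ms' hs' \<and> enc 0 ls gs = enc 0 ls' gs'"
      using cfg_inj[OF enc1_ge enc1_ge] eq unfolding Phi_def pp pp' by simp
    then show "p = p'" using enc_inj p p' unfolding pp pp' by auto
  qed
  show "Phi ` (SL \<times> SL) = spin_configs"
  proof
    show "Phi ` (SL \<times> SL) \<subseteq> spin_configs"
      unfolding Phi_def using cfg_in by auto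
    show "spin_configs \<subseteq> Phi ` (SL \<times> SL)"
    proof
      fix \<sigma> assume "\<sigma> \<in> spin_configs"
      then obtain B A where BA: "finite A" "finite B" "A \<subseteq> {1..}" "\<sigma> = cfg B A"
        using cfg_surj by blast
      obtain ls gs where L: "(ls,gs) \<in> SL" "B = enc 0 ls gs" using enc_surj[OF BA(2), of 0] by auto
      obtain ms hs where R: "(ms,hs) \<in> SL" "A = enc 1 ms hs" using enc_surj[OF BA(1), of 1] BA(3) by auto
      have "\<sigma> = Phi ((ls,gs),(ms,hs))" unfolding Phi_def using BA L R by simp
      then show "\<sigma> \<in> Phi ` (SL \<times> SL)" using L R by blast
    qed
  qed
qed


lemma ham_cfg:
  assumes fA: "finite A" and fB: "finite B" and A1: "A \<subseteq> {1..}"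
  shows "hamiltonian (cfg B A) = real (card (bd B) + card (bd A - {0}) + (if (0\<in>B) = (1\<in>A) then 1 else 0))"
proof -
  let ?s = "cfg B A"
  define W where "W = {i. ?s i \<noteq> ?s (i+1)}"
  define W1 where "W1 = (\<lambda>j::nat. - int j - 1) ` bd B"
  define W2 where "W2 = int ` (bd A - {0})"
  define W3 where "W3 = (if (0\<in>B) = (1\<in>A) then {0::int} else {})"
  have W: "W = W1 \<union> W2 \<union> W3"
  proof (rule set_eqI)
    fix i :: int
    consider "i < 0" | "i = 0" | "i > 0" by linarith
    then show "i \<in> W \<longleftrightarrow> i \<in> W1 \<union> W2 \<union> W3"
    proof cases
      case 1
      define j where "j = nat (-i-1)"
      have ij: "i = - int j - 1" using 1 j_def by simp
      have "i \<in> W \<longleftrightarrow> j \<in> bd B"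
        unfolding W_def bd_def ij cfg_def using 1
        by (simp add: nat_add_distrib)
      moreover have "i \<in> W1 \<longleftrightarrow> j \<in> bd B" unfolding W1_def ij by (auto simp: image_iff)
      moreover have "i \<notin> W2" "i \<notin> W3" using 1 unfolding W2_def W3_def by auto
      ultimately show ?thesis by blast
    next
      case 2
      have "i \<in> W \<longleftrightarrow> (0\<in>B) = (1\<in>A)" unfolding W_def cfg_def 2 by auto
      moreover have "i \<notin> W1" "i \<notin> W2" using 2 unfolding W1_def W2_def by auto
      ultimately show ?thesis unfolding W3_def using 2 by auto
    next
      case 3
      define n where "n = nat i"
      have ni: "i = int n" "n \<noteq> 0" using 3 n_def by auto
      have "i \<in> W \<longleftrightarrow> n \<in> bd A"
        unfolding W_def bd_def ni cfg_def using 3 ni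
        by (auto simp: nat_add_distrib)
      moreover have "i \<in> W2 \<longleftrightarrow> n \<in> bd A" unfolding W2_def ni using ni by auto
      moreover have "i \<notin> W1" "i \<notin> W3" using 3 unfolding W1_def W3_def by auto
      ultimately show ?thesis by blast
    qed
  qed
  have fbd: "finite (bd S)" if "finite S" for S :: "nat set"
  proof -
    have "bd S \<subseteq> S \<union> (\<lambda>j. j - 1) ` S"
      unfolding bd_def by (force simp: image_iff)
    then show ?thesis using that by (meson finite_Un finite_imageI finite_subset)
  qed
  have f1: "finite W1" "finite W2" "finite W3"
    unfolding W1_def W2_def W3_def using fbd fA fB by auto
  have d12: "W1 \<inter> W2 = {}" "(W1 \<union> W2) \<inter> W3 = {}" unfolding W1_def W2_def W3_def by auto
  have c1: "card W1 = card (bd B)" unfolding W1_def by (rule card_image) (auto simp: inj_on_def)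
  have c2: "card W2 = card (bd A - {0})" unfolding W2_def by (rule card_image) (auto simp: inj_on_def)
  have c3: "card W3 = (if (0\<in>B) = (1\<in>A) then 1 else 0)" unfolding W3_def by auto
  have cardW: "card W = card (bd B) + card (bd A - {0}) + (if (0\<in>B) = (1\<in>A) then 1 else 0)"
  proof -
    have "card W = card (W1 \<union> W2) + card W3" unfolding W by (rule card_Un_disjoint) (use f1 d12 in auto)
    also have "card (W1 \<union> W2) = card W1 + card W2" by (rule card_Un_disjoint[OF f1(1,2) d12(1)])
    finally show ?thesis using c1 c2 c3 by simp
  qed
  have "hamiltonian ?s = (\<Sum>\<^sub>\<infinity> i\<in>W. (1::real))"
    unfolding hamiltonian_def W_def by (rule infsum_cong_neutral) auto
  also have "\<dots> = real (card W)" using f1 W by simp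
  finally show ?thesis using cardW by simp
qed

lemma f_cfg:
  assumes fA: "finite A" and fB: "finite B" and A1: "A \<subseteq> {1..}"
  shows "f_field c (cfg B A) = 2 * (\<Sum>i\<in>A. real i - c) + 2 * (\<Sum>j\<in>B. real j + c)"
proof -
  have r: "(\<Sum>\<^sub>\<infinity> i\<in>{i::int. i \<ge> 1}. (real_of_int i - c) * (if cfg B A i = -1 then 1 else 0))
      = (\<Sum>\<^sub>\<infinity> i\<in>int ` A. real_of_int i - c)"
  proof (rule infsum_cong_neutral)
    fix i assume "i \<in> {i::int. i \<ge> 1} - int ` A"
    then have "i \<ge> 1" "nat i \<notin> A"
      by (auto simp: image_iff)
    then show "(real_of_int i - c) * (if cfg B A i = -1 then 1 else 0) = 0" by (simp add: cfg_def)
  qed (use A1 in \<open>auto simp: cfg_def\<close>)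
  also have "\<dots> = (\<Sum>i\<in>int ` A. real_of_int i - c)" using fA by simp
  also have "\<dots> = (\<Sum>i\<in>A. real i - c)" by (subst sum.reindex) (auto simp: inj_on_def)
  finally have R: "(\<Sum>\<^sub>\<infinity> i\<in>{i::int. i \<ge> 1}. (real_of_int i - c) * (if cfg B A i = -1 then 1 else 0)) = (\<Sum>i\<in>A. real i - c)" .
  have "(\<Sum>\<^sub>\<infinity> i\<in>{i::int. i \<le> 0}. (real_of_int i - c) * (if cfg B A i = 1 then 1 else 0))
      = (\<Sum>\<^sub>\<infinity> i\<in>(\<lambda>n. - int n) ` B. real_of_int i - c)"
  proof (rule infsum_cong_neutral)
    fix i assume "i \<in> {i::int. i \<le> 0} - (\<lambda>n. - int n) ` B"
    then have "i \<le> 0" "nat (-i) \<notin> B"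
      by (auto simp: image_iff)
    then show "(real_of_int i - c) * (if cfg B A i = 1 then 1 else 0) = 0" by (simp add: cfg_def)
  qed (auto simp: cfg_def)
  also have "\<dots> = (\<Sum>i\<in>(\<lambda>n. - int n) ` B. real_of_int i - c)" using fB by simp
  also have "\<dots> = (\<Sum>j\<in>B. - real j - c)" by (subst sum.reindex) (auto simp: inj_on_def)
  finally have L: "(\<Sum>\<^sub>\<infinity> i\<in>{i::int. i \<le> 0}. (real_of_int i - c) * (if cfg B A i = 1 then 1 else 0)) = (\<Sum>j\<in>B. - real j - c)" .
  have "(\<Sum>j\<in>B. - real j - c) = - (\<Sum>j\<in>B. real j + c)"
    by (simp add: sum_negf[symmetric] algebra_simps sum.distrib sum_subtractf)
  then show ?thesis unfolding f_field_def R L by simp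
qed


lemma fin_sets_summable:
  fixes a :: "nat \<Rightarrow> real"
  assumes a0: "\<And>i. 0 \<le> a i" and aM: "\<And>N. (\<Sum>i<N. a i) \<le> M"
  shows "(\<lambda>S. \<Prod>i\<in>S. a i) summable_on {S. finite S}"
proof (rule nonneg_bdd_above_summable_on)
  show "\<And>S. S \<in> {S. finite S} \<Longrightarrow> 0 \<le> (\<Prod>i\<in>S. a i)" using a0 by (simp add: prod_nonneg)
  show "bdd_above (sum (\<lambda>S. \<Prod>i\<in>S. a i) ` {F. F \<subseteq> {S. finite S} \<and> finite F})"
  proof (rule bdd_aboveI2)
    fix F :: "nat set set" assume F: "F \<in> {F. F \<subseteq> {S. finite S} \<and> finite F}"
    then have "finite (\<Union>F)" by auto
    then obtain N where N: "\<Union>F \<subseteq> {..<N}" using finite_nat_bounded by blast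
    have "sum (\<lambda>S. \<Prod>i\<in>S. a i) F \<le> sum (\<lambda>S. \<Prod>i\<in>S. a i) (Pow {..<N})"
      by (rule sum_mono2) (use N a0 in \<open>auto simp: prod_nonneg\<close>)
    also have "\<dots> = (\<Prod>i<N. a i + 1)"
      by (subst prod_add) auto
    also have "\<dots> \<le> (\<Prod>i<N. exp (a i))"
      by (rule prod_mono) (use a0 in \<open>auto simp: add.commute\<close>)
    also have "\<dots> = exp (\<Sum>i<N. a i)" by (simp add: exp_sum)
    also have "\<dots> \<le> exp M" using aM by simp
    finally show "sum (\<lambda>S. \<Prod>i\<in>S. a i) F \<le> exp M" .
  qed
qed

lemma U_summable:
  assumes Q: "0 < Q" "Q < 1"
  shows "(\<lambda>(ls,gs). Q powr wt x0 d ls gs) summable_on SL"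
proof -
  define a where "a i = Q powr (real i + d)" for i :: nat
  have a0: "\<And>i. 0 \<le> a i" unfolding a_def by simp
  have ai: "a i = Q powr d * Q^i" for i
    unfolding a_def using Q by (simp add: powr_add powr_realpow)
  have sg: "summable (\<lambda>i. Q powr d * Q^i)"
    using Q by (intro summable_mult summable_geometric) auto
  have aM: "(\<Sum>i<N. a i) \<le> (\<Sum>i. Q powr d * Q^i)" for N
    unfolding ai by (rule sum_le_suminf[OF sg]) (use Q in auto)
  have S: "(\<lambda>S. \<Prod>i\<in>S. a i) summable_on {S. finite S}"
    by (rule fin_sets_summable[OF a0 aM])
  let ?h = "\<lambda>(ls,gs). enc x0 ls gs"
  have inj: "inj_on ?h SL"
    by (rule inj_onI) (use enc_inj in auto)
  have "(\<lambda>S. \<Prod>i\<in>S. a i) summable_on (?h ` SL)"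
    by (rule summable_on_subset[OF S]) auto
  then have "((\<lambda>S. \<Prod>i\<in>S. a i) \<circ> ?h) summable_on SL"
    using summable_on_reindex[OF inj] by blast
  moreover have "((\<lambda>S. \<Prod>i\<in>S. a i) \<circ> ?h) p = (\<lambda>(ls,gs). Q powr wt x0 d ls gs) p" for p
  proof -
    obtain ls gs where p: "p = (ls,gs)" by (cases p)
    have "Q powr wt x0 d ls gs = Q powr (\<Sum>i\<in>enc x0 ls gs. real i + d)" by (simp add: sum_enc)
    also have "\<dots> = (\<Prod>i\<in>enc x0 ls gs. a i)" unfolding a_def using Q by (simp add: powr_sum)
    finally show ?thesis using p by simp
  qed
  ultimately show ?thesis by (simp add: comp_def)
qed


definition nt :: "nat list \<Rightarrow> real" where "nt gs = (if gs = [] \<or> 1 \<le> hd gs then 1 else 0)"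

lemma H_Phi:
  assumes "(ls,gs) \<in> SL" "(ms,hs) \<in> SL"
  shows "hamiltonian (Phi ((ls,gs),(ms,hs))) =
    (if (ls \<noteq> [] \<and> hd gs = 0) \<or> (ms \<noteq> [] \<and> hd hs = 0)
     then 2 * real (length ls + length ms) - 1 else 2 * real (length ls + length ms) + 1)"
proof -
  let ?B = "enc 0 ls gs" and ?A = "enc 1 ms hs"
  define tL where "tL = (ls \<noteq> [] \<and> hd gs = 0)"
  define tR where "tR = (ms \<noteq> [] \<and> hd hs = 0)"
  have pl: "\<forall>x\<in>set ls. 0<x" "length gs = length ls" using assms by (auto simp: SL_def)
  have pm: "\<forall>x\<in>set ms. 0<x" "length hs = length ms" using assms by (auto simp: SL_def)
  have cB: "card (bd ?B) = 2 * length ls - (if tL then 1 else 0)"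
    using card_bd[OF pl, of 0] tL_def by simp
  have cA: "card (bd ?A) = 2 * length ms"
    using card_bd[OF pm, of 1] by simp
  have A0: "0 \<notin> ?A" using enc1_ge[of ms hs] by auto
  have mA: "1 \<in> ?A \<longleftrightarrow> tR" using mem_enc0[OF pm, of 1] tR_def by simp
  have mB: "0 \<in> ?B \<longleftrightarrow> tL" using mem_enc0[OF pl, of 0] tL_def by simp
  have bA0: "0 \<in> bd ?A \<longleftrightarrow> tR" using A0 mA by (simp add: bd_def)
  have cA': "card (bd ?A - {0}) = 2 * length ms - (if tR then 1 else 0)"
    using cA bA0 by (simp add: card_Diff_singleton_if)
  have Lp: "tL \<Longrightarrow> length ls \<ge> 1" unfolding tL_def by (cases ls) auto
  have Rp: "tR \<Longrightarrow> length ms \<ge> 1" unfolding tR_def by (cases ms) auto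
  have "hamiltonian (Phi ((ls,gs),(ms,hs))) = real (card (bd ?B) + card (bd ?A - {0}) + (if (0\<in>?B) = (1\<in>?A) then 1 else 0))"
    unfolding Phi_def using ham_cfg[OF enc_finite enc_finite enc1_ge] by simp
  also have "\<dots> = (if tL \<or> tR then 2 * real (length ls + length ms) - 1 else 2 * real (length ls + length ms) + 1)"
    unfolding cB cA' mA mB using Lp Rp by (auto simp: of_nat_diff)
  finally show ?thesis unfolding tL_def tR_def .
qed

lemma qf_Phi:
  assumes "(ls,gs) \<in> SL" "(ms,hs) \<in> SL" "0 < q" "Q = q^2"
  shows "q powr f_field c (Phi ((ls,gs),(ms,hs))) = Q powr wt 0 c ls gs * Q powr wt 1 (-c) ms hs"
proof -
  have "f_field c (Phi ((ls,gs),(ms,hs))) = 2 * (\<Sum>i\<in>enc 1 ms hs. real i + (-c)) + 2 * (\<Sum>j\<in>enc 0 ls gs. real j + c)"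
    unfolding Phi_def using f_cfg[OF enc_finite enc_finite enc1_ge] by simp
  also have "\<dots> = 2 * (wt 0 c ls gs + wt 1 (-c) ms hs)" by (simp only: sum_enc) simp
  finally have f: "f_field c (Phi ((ls,gs),(ms,hs))) = 2 * (wt 0 c ls gs + wt 1 (-c) ms hs)" .
  have "Q powr x = q powr (2 * x)" for x
    using assms by (simp add: powr_powr[symmetric])
  then show ?thesis unfolding f by (simp add: powr_add)
qed

lemma Z_Phi:
  assumes b: "\<beta> \<ge> 0" and q: "0 < q" and Qd: "Q = q^2" and yd: "y = exp (- 2 * \<beta>)"
    and SL: "(ls,gs) \<in> SL" "(ms,hs) \<in> SL"
  shows "Z_term \<beta> q c (Phi ((ls,gs),(ms,hs))) =
     y^(length ls + length ms) * (y powr (-1/2) + (y powr (1/2) - y powr (-1/2)) * (nt gs * nt hs))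
     * (Q powr wt 0 c ls gs * Q powr wt 1 (-c) ms hs)"
proof -
  define n where "n = length ls + length ms"
  have pl: "length gs = length ls" and pm: "length hs = length ms" using SL by (auto simp: SL_def)
  have ypow: "y powr a = exp (-2 * \<beta> * a)" for a unfolding yd powr_def by simp
  have yn: "y^n = exp (-2 * \<beta> * real n)" using ypow[of "real n"] yd by (simp add: powr_realpow)
  have nts: "nt gs * nt hs = (if (ls \<noteq> [] \<and> hd gs = 0) \<or> (ms \<noteq> [] \<and> hd hs = 0) then 0 else 1)"
    unfolding nt_def using pl pm by (auto simp: Suc_le_eq)
  have "exp (- \<beta> * hamiltonian (Phi ((ls,gs),(ms,hs)))) =
        y^n * (y powr (-1/2) + (y powr (1/2) - y powr (-1/2)) * (nt gs * nt hs))"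
    unfolding H_Phi[OF SL] nts yn ypow n_def[symmetric]
    by (auto simp: exp_add[symmetric] algebra_simps)
  then show ?thesis unfolding Z_term_def qf_Phi[OF SL q Qd] n_def by simp
qed

lemma Z_Phi_le:
  assumes b: "\<beta> \<ge> 0" and q: "0 < q" and Qd: "Q = q^2"
    and SL: "(ls,gs) \<in> SL" "(ms,hs) \<in> SL"
  shows "0 \<le> Z_term \<beta> q c (Phi ((ls,gs),(ms,hs))) \<and> Z_term \<beta> q c (Phi ((ls,gs),(ms,hs))) \<le> Q powr wt 0 c ls gs * Q powr wt 1 (-c) ms hs"
proof -
  have "hamiltonian (Phi ((ls,gs),(ms,hs))) \<ge> 0" unfolding H_Phi[OF SL] by (cases ls; cases ms) auto
  then have "exp (- \<beta> * hamiltonian (Phi ((ls,gs),(ms,hs)))) \<le> 1" using b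
    by (simp add: mult_nonneg_nonneg)
  then show ?thesis unfolding Z_term_def qf_Phi[OF SL q Qd]
    by (auto intro!: mult_left_le_one_le simp: Qd)
qed


definition I0 :: "(nat list \<times> nat list) set" where
  "I0 = {(ls, ms). (\<forall>x\<in>set ls. 0 < x) \<and> (\<forall>x\<in>set ms. 0 < x)}"

definition BB :: "nat list \<times> nat list \<Rightarrow> (nat list \<times> nat list) set" where
  "BB x = {gs. length gs = length (fst x)} \<times> {hs. length hs = length (snd x)}"

definition Psi :: "(nat list \<times> nat list) \<times> (nat list \<times> nat list) \<Rightarrow> (nat list \<times> nat list) \<times> (nat list \<times> nat list)" where
  "Psi z = ((fst (fst z), fst (snd z)), (snd (fst z), snd (snd z)))"

lemma Psi_bij: "bij_betw Psi (Sigma I0 BB) (SL \<times> SL)"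
  by (rule bij_betw_byWitness[where f'=Psi]) (auto simp: Psi_def I0_def BB_def SL_def)

lemma inner_sum:
  assumes b: "\<beta> \<ge> 0" and q: "0 < q" "q < 1" and Qd: "Q = q^2" and yd: "y = exp (- 2 * \<beta>)"
    and x: "(ls,ms) \<in> I0"
  shows "((\<lambda>w. Z_term \<beta> q c (Phi (Psi ((ls,ms),w)))) has_sum series_term y Q c (ls,ms)) (BB (ls,ms))"
proof -
  have Q: "0 < Q" "Q < 1"
  proof -
    show "0 < Q" using q Qd by simp
    have "q * q < 1 * 1" by (rule mult_strict_mono) (use q in auto)
    then show "Q < 1" using Qd by (simp add: power2_eq_square)
  qed
  have pl: "\<forall>x\<in>set ls. 0<x" and pm: "\<forall>x\<in>set ms. 0<x" using x by (auto simp: I0_def)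
  define n where "n = length ls + length ms"
  define SLs where "SLs = sum_list ls"
  define Sm where "Sm = sum_list ms"
  define BPL where "BPL = block_prod Q c (-1) ls"
  define BPR where "BPR = block_prod Q (-c) (-1) ms"
  define a where "a gs = Q powr wt 0 c ls gs" for gs
  define b where "b hs = Q powr wt 1 (-c) ms hs" for hs
  define K1 where "K1 = y^n * y powr (-1/2)"
  define K2 where "K2 = y^n * (y powr (1/2) - y powr (-1/2))"
  have bshift: "b hs = Q^Sm * Q powr wt 0 (-c) ms hs" if "length hs = length ms" for hs
    using wt_shift[of 0 1 "-c" ms hs] that Q unfolding b_def Sm_def
    by (simp add: powr_add powr_realpow)
  have Ha: "(a has_sum BPL) {gs. length gs = length ls}"
    using GS[OF Q pl, of 0 c] unfolding a_def BPL_def by simp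
  have Hna: "((\<lambda>gs. nt gs * a gs) has_sum (Q^SLs * BPL)) {gs. length gs = length ls}"
    using GS[OF Q pl, of 1 c] unfolding a_def BPL_def SLs_def nt_def by simp
  have Hb0: "((\<lambda>hs. Q powr wt 0 (-c) ms hs) has_sum BPR) {hs. length hs = length ms}"
    using GS[OF Q pm, of 0 "-c"] unfolding BPR_def by simp
  have Hnb0: "((\<lambda>hs. nt hs * Q powr wt 0 (-c) ms hs) has_sum (Q^Sm * BPR)) {hs. length hs = length ms}"
    using GS[OF Q pm, of 1 "-c"] unfolding BPR_def Sm_def nt_def by simp
  have Hb: "(b has_sum (Q^Sm * BPR)) {hs. length hs = length ms}"
    using has_sum_cmult_right[OF Hb0, of "Q^Sm"]
    by (rule has_sum_cong[THEN iffD1, rotated]) (simp add: bshift)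
  have Hnb: "((\<lambda>hs. nt hs * b hs) has_sum (Q^Sm * (Q^Sm * BPR))) {hs. length hs = length ms}"
    using has_sum_cmult_right[OF Hnb0, of "Q^Sm"]
    by (rule has_sum_cong[THEN iffD1, rotated]) (simp add: bshift)
  have nt0: "0 \<le> nt gs" for gs by (simp add: nt_def)
  have P1: "((\<lambda>(gs,hs). a gs * b hs) has_sum (BPL * (Q^Sm * BPR))) (BB (ls,ms))"
    unfolding BB_def fst_conv snd_conv by (rule has_sum_prod_nonneg[OF Ha Hb]) (auto simp: a_def b_def)
  have P2: "((\<lambda>(gs,hs). (nt gs * a gs) * (nt hs * b hs)) has_sum ((Q^SLs * BPL) * (Q^Sm * (Q^Sm * BPR)))) (BB (ls,ms))"
    unfolding BB_def fst_conv snd_conv by (rule has_sum_prod_nonneg[OF Hna Hnb]) (auto simp: a_def b_def nt_def)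
  have P: "((\<lambda>w. K1 * (\<lambda>(gs,hs). a gs * b hs) w + K2 * (\<lambda>(gs,hs). (nt gs * a gs) * (nt hs * b hs)) w) has_sum
      (K1 * (BPL * (Q^Sm * BPR)) + K2 * ((Q^SLs * BPL) * (Q^Sm * (Q^Sm * BPR))))) (BB (ls,ms))"
    by (intro has_sum_add has_sum_cmult_right P1 P2)
  have val: "K1 * (BPL * (Q^Sm * BPR)) + K2 * ((Q^SLs * BPL) * (Q^Sm * (Q^Sm * BPR))) = series_term y Q c (ls,ms)"
  proof -
    have "block_prod Q (-c) 0 ms = Q^Sm * BPR"
      unfolding BPR_def Sm_def using BP_shift[OF Q(1), of "-c" 0 ms] Q by (simp add: powr_realpow)
    then show ?thesis unfolding series_term_def K1_def K2_def n_def SLs_def Sm_def BPL_def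
      by (simp add: algebra_simps)
  qed
  have eq: "Z_term \<beta> q c (Phi (Psi ((ls,ms),w))) = K1 * (\<lambda>(gs,hs). a gs * b hs) w + K2 * (\<lambda>(gs,hs). (nt gs * a gs) * (nt hs * b hs)) w"
    if "w \<in> BB (ls,ms)" for w
  proof -
    obtain gs hs where w: "w = (gs,hs)" by (cases w)
    have SL: "(ls,gs) \<in> SL" "(ms,hs) \<in> SL" using that pl pm w by (auto simp: BB_def SL_def)
    show ?thesis unfolding w Psi_def using Z_Phi[OF b q(1) Qd yd SL, of c]
      by (simp add: K1_def K2_def n_def a_def b_def algebra_simps)
  qed
  show ?thesis using P unfolding val
    by (rule has_sum_cong[THEN iffD1, rotated]) (simp add: eq)
qed


theorem corollary4p3:
  fixes c \<beta> q Q y :: real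
  assumes "\<beta> \<ge> 0" and "0 < q" and "q < 1"
    and "Q = q ^ 2" and "y = exp (- 2 * \<beta>)"
  shows "series_term y Q c summable_on index_set \<and>
         (Z_term \<beta> q c has_sum
            (y powr (1/2) + (\<Sum>\<^sub>\<infinity> p\<in>index_set. series_term y Q c p))) spin_configs"
proof -
  note b = assms(1) and q = assms(2,3) and Qd = assms(4) and yd = assms(5)
  have Q: "0 < Q" "Q < 1"
  proof -
    show "0 < Q" using q Qd by simp
    have "q * q < 1 * 1" by (rule mult_strict_mono) (use q in auto)
    then show "Q < 1" using Qd by (simp add: power2_eq_square)
  qed
  define F where "F = (\<lambda>p. Z_term \<beta> q c (Phi p))"
  define f1 where "f1 = (\<lambda>(ls,gs). Q powr wt 0 c ls gs)"
  define f2 where "f2 = (\<lambda>(ms,hs). Q powr wt 1 (-c) ms hs)"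
  have s1: "f1 summable_on SL" unfolding f1_def by (rule U_summable[OF Q])
  have s2: "f2 summable_on SL" unfolding f2_def by (rule U_summable[OF Q])
  have U: "(\<lambda>(x,z). f1 x * f2 z) summable_on (SL \<times> SL)"
    using has_sum_prod_nonneg[OF s1[unfolded summable_iff_has_sum_infsum] s2[unfolded summable_iff_has_sum_infsum]]
    unfolding f1_def f2_def by (auto intro: has_sum_imp_summable)
  have FS: "F summable_on (SL \<times> SL)"
  proof (rule summable_on_comparison_test[OF U])
    fix p assume "p \<in> SL \<times> SL"
    then obtain ls gs ms hs where p: "p = ((ls,gs),(ms,hs))" "(ls,gs) \<in> SL" "(ms,hs) \<in> SL"
      by (metis mem_Times_iff prod.collapse)
    show "F p \<le> (\<lambda>(x,z). f1 x * f2 z) p" "0 \<le> F p"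
      using Z_Phi_le[OF b q(1) Qd p(2,3), of c] unfolding p(1) F_def f1_def f2_def by auto
  qed
  have GS: "(\<lambda>z. F (Psi z)) summable_on Sigma I0 BB"
    using FS summable_on_reindex_bij_betw[OF Psi_bij] by blast
  have inner: "((\<lambda>w. F (Psi (x,w))) has_sum series_term y Q c x) (BB x)" if "x \<in> I0" for x
    using inner_sum[OF b q Qd yd, of "fst x" "snd x" c] that unfolding F_def by simp
  have outer_eq: "(\<lambda>x. infsum (\<lambda>w. F (Psi (x,w))) (BB x)) x = series_term y Q c x" if "x \<in> I0" for x
    using inner[OF that] by (simp add: infsumI)
  have "(\<lambda>x. infsum (\<lambda>w. F (Psi (x,w))) (BB x)) summable_on I0"
  proof -
    have "(\<lambda>(x,w). F (Psi (x,w))) = (\<lambda>z. F (Psi z))" by auto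
    then show ?thesis using summable_on_Sigma_banach[of "\<lambda>x w. F (Psi (x,w))" I0 BB] GS by simp
  qed
  then have ST: "series_term y Q c summable_on I0"
    using summable_on_cong[of I0 "\<lambda>x. infsum (\<lambda>w. F (Psi (x,w))) (BB x)" "series_term y Q c"] outer_eq
    by blast
  have "((\<lambda>z. F (Psi z)) has_sum infsum (series_term y Q c) I0) (Sigma I0 BB)"
    by (rule has_sum_SigmaI[OF _ _ GS]) (use inner ST in \<open>auto simp: summable_iff_has_sum_infsum\<close>)
  then have "(F has_sum infsum (series_term y Q c) I0) (SL \<times> SL)"
    using has_sum_reindex_bij_betw[OF Psi_bij] by blast
  then have Zh: "(Z_term \<beta> q c has_sum infsum (series_term y Q c) I0) spin_configs"
    using has_sum_reindex_bij_betw[OF Phi_bij] unfolding F_def by blast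
  have I0ins: "I0 = insert ([],[]) index_set" and notin: "([],[]) \<notin> index_set"
    unfolding I0_def index_set_def by auto
  have SI: "series_term y Q c summable_on index_set"
    using summable_on_subset[OF ST] I0ins by blast
  have "(series_term y Q c has_sum (series_term y Q c ([],[]) + infsum (series_term y Q c) index_set)) I0"
    unfolding I0ins by (rule has_sum_insert[OF notin]) (use SI in \<open>simp add: summable_iff_has_sum_infsum\<close>)
  then have "infsum (series_term y Q c) I0 = series_term y Q c ([],[]) + infsum (series_term y Q c) index_set"
    by (simp add: infsumI)
  moreover have "series_term y Q c ([],[]) = y powr (1/2)"
    unfolding series_term_def by simp
  ultimately show ?thesis using SI Zh by simp
qed


end
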